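(* Let $t \in \mathsf{Topo}$ and let $P = \{pkt_1, \dots, pkt_{|t|}\} \subseteq \mathsf{Pkt}$ be a set of $|t|$ distinct packets. For each permutation $\pi$ of $P$ there exists a well-formed PIFO tree $q_\pi \in \mathsf{PIFOTree}(t)$ such that $\mathsf{flush}(q_\pi) = \pi(pkt_{|t|}) \cdots \pi(pkt_1)$ and $\mathsf{snap}(q_\pi)$ is the list $[pkt_1, \dots, pkt_{|t|}]$ of one-letter words (i.e., the $i$-th leaf from the left holds exactly the packet $pkt_i$).
   Context: Fix a set $\mathsf{Pkt}$ of packets and a totally ordered set $\mathsf{Rk}$ of ranks (smaller is more favorable). PIFOs: for a set $S$, a PIFO over $S$ is a finite sequence of pairs $(s,r)\in S\times\mathsf{Rk}$ in insertion order; $\mathsf{PIFO}(S)$ is the set of these. $\mathsf{pop}_{\mathsf{PIFO}}(p)$ is undefined if $p$ is empty; otherwise it removes the entry of minimal rank (earliest-inserted among ties) and returns $(s,p')$. $|p|$ is the number of entries, $|p|_s$ the number with element $s$. Topologies: $\mathsf{Topo}$ is the smallest set with $*\in\mathsf{Topo}$ and $\mathsf{Node}(\vec t)\in\mathsf{Topo}$ for $n\in\mathbb{N}$, $\vec t\in\mathsf{Topo}^n$. Number of leaves: $|*|=1$, $|\mathsf{Node}(\vec t)|=\sum_i|\vec t[i]|$. PIFO trees: $\mathsf{Leaf}(p)\in\mathsf{PIFOTree}( * )$ for $p\in\mathsf{PIFO}(\mathsf{Pkt})$; $\mathsf{Internal}(\vec q,p)\in\mathsf{PIFOTree}(\mathsf{Node}(\vec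 t))$ whenever $\vec t\in\mathsf{Topo}^n$, $p\in\mathsf{PIFO}(\{1,\dots,n\})$, $\vec q[i]\in\mathsf{PIFOTree}(\vec t[i])$. $\vec q[q'/i]$ replaces the $i$-th entry by $q'$. pop (partial): $\mathsf{pop}(\mathsf{Leaf}(p))=(pkt,\mathsf{Leaf}(p'))$ if $\mathsf{pop}_{\mathsf{PIFO}}(p)=(pkt,p')$; $\mathsf{pop}(\mathsf{Internal}(\vec q,p))=(pkt,\mathsf{Internal}(\vec q[q'/i],p'))$ if $\mathsf{pop}_{\mathsf{PIFO}}(p)=(i,p')$ and $\mathsf{pop}(\vec q[i])=(pkt,q')$; undefined otherwise. Size: $|\mathsf{Leaf}(p)|=|p|$, $|\mathsf{Internal}(\vec q,p)|=\sum_i|\vec q[i]|$. Well-formedness: $\vdash\mathsf{Leaf}(p)$ always; $\vdash\mathsf{Internal}(\vec q,p)$ iff for all $i$, $\vdash\vec q[i]$ and $|p|_i=|\vec q[i]|$. Words are written by juxtaposition; $\epsilon$ is the empty word, $\cdot$ concatenation. For a PIFO $p$, $\textsc{flush}(p)$ is the word obtained by popping $p$ until empty, last popped leftmost. $\mathsf{snap}(\mathsf{Leaf}(p))=[\textsc{flush}(p)]$, $\mathsf{snap}(\mathsf{Internal}(\vec q,p))=\mathsf{snap}(\vec q[1]) +\!\!+\cdots+\!\!+\mathsf{snap}(\vec q[n])$ (list concatenation). For well-formed $q$: $\mathsf{flush}(q)=\epsilon$ if $|q|=0$, and $\mathsf{flush}(q)=\mathsf{flush}(q')\cdot pkt$ if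 $|q|>0$ and $\mathsf{pop}(q)=(pkt,q')$. *)

theory Defs
  imports Main
begin

text \<open>A PIFO over S: finite sequence of (element, rank) pairs in insertion order.
  Ranks come from a linearly ordered type 'r (smaller is more favourable).\<close>
type_synonym ('s, 'r) pifo = "('s \<times> 'r) list"

definition pifo_elems :: "('s, 'r) pifo \<Rightarrow> 's set" where
  "pifo_elems p = fst ` set p"

definition pifo_count :: "('s, 'r) pifo \<Rightarrow> 's \<Rightarrow> nat" where
  "pifo_count p s = length (filter (\<lambda>e. fst e = s) p)"

definition pop_pifo :: "('s, 'r::linorder) pifo \<Rightarrow> ('s \<times> ('s, 'r) pifo) option" where
  "pop_pifo p = (if p = [] then None else
     (let r = Min (snd ` set p);
          k = (LEAST k. k < length p \<and> snd (p ! k) = r)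
      in Some (fst (p ! k), take k p @ drop (Suc k) p)))"

lemma pop_pifo_least:
  assumes "p \<noteq> []"
  shows "(LEAST k. k < length p \<and> snd (p ! k) = Min (snd ` set p)) < length p"
proof -
  have "Min (snd ` set p) \<in> snd ` set p" using assms by (intro Min_in) auto
  then obtain x where x: "Min (snd ` set p) = snd x" "x \<in> set p" by (elim imageE) simp
  obtain k where k: "k < length p" "p ! k = x" using x(2) by (metis in_set_conv_nth)
  from k x have "k < length p \<and> snd (p ! k) = Min (snd ` set p)" by metis
  then have "(LEAST k. k < length p \<and> snd (p ! k) = Min (snd ` set p)) < length p
     \<and> snd (p ! (LEAST k. k < length p \<and> snd (p ! k) = Min (snd ` set p))) = Min (snd ` set p)"
    by (rule LeastI)
  then show ?thesis by (rule conjunct1)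
qed

lemma pop_pifo_length:
  "pop_pifo p = Some (s, p') \<Longrightarrow> length p' < length p"
  using pop_pifo_least[of p] by (auto simp: pop_pifo_def Let_def split: if_splits)

function flush_pifo :: "('s, 'r::linorder) pifo \<Rightarrow> 's list" where
  "flush_pifo p = (case pop_pifo p of None \<Rightarrow> [] | Some (s, p') \<Rightarrow> flush_pifo p' @ [s])"
  by pat_completeness auto
termination
  by (relation "measure length") (auto dest: pop_pifo_length)

declare flush_pifo.simps[simp del]

datatype topo = Star | Node "topo list"

fun leaves :: "topo \<Rightarrow> nat" where
  "leaves Star = 1"
| "leaves (Node ts) = sum_list (map leaves ts)"

text \<open>Internal nodes carry a PIFO over child indices {1..n} (1-based, as in the paper).\<close>
datatype ('p, 'r) ptree = Leaf "('p, 'r) pifo" | Internal "('p, 'r) ptree list" "(nat, 'r) pifo"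

fun has_topo :: "('p, 'r) ptree \<Rightarrow> topo \<Rightarrow> bool" where
  "has_topo (Leaf p) Star = True"
| "has_topo (Internal qs p) (Node ts) =
     (pifo_elems p \<subseteq> {1..length ts} \<and>
      list_all2 has_topo qs ts)"
| "has_topo _ _ = False"

fun tsize :: "('p, 'r) ptree \<Rightarrow> nat" where
  "tsize (Leaf p) = length p"
| "tsize (Internal qs p) = sum_list (map tsize qs)"

fun wf_tree :: "('p, 'r) ptree \<Rightarrow> bool" where
  "wf_tree (Leaf p) = True"
| "wf_tree (Internal qs p) =
     (list_all wf_tree qs \<and> (\<forall>i < length qs. pifo_count p (Suc i) = tsize (qs ! i)))"

function pop_tree :: "('p, 'r::linorder) ptree \<Rightarrow> ('p \<times> ('p, 'r) ptree) option" where
  "pop_tree (Leaf p) = (case pop_pifo p of None \<Rightarrow> None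
       | Some (pkt, p') \<Rightarrow> Some (pkt, Leaf p'))"
| "pop_tree (Internal qs p) = (case pop_pifo p of None \<Rightarrow> None
       | Some (i, p') \<Rightarrow>
           (if 1 \<le> i \<and> i \<le> length qs then
              (case pop_tree (qs ! (i - 1)) of None \<Rightarrow> None
                 | Some (pkt, q') \<Rightarrow> Some (pkt, Internal (qs[i - 1 := q']) p'))
            else None))"
  by pat_completeness auto
termination
proof (relation "measure size")
  fix qs :: "('p, 'r) ptree list" and p x xa i p' xb
  assume "1 \<le> i \<and> i \<le> length qs"
  then have "qs ! (i - 1) \<in> set qs" by auto
  then have "size (qs ! (i - 1)) \<le> size_list size qs" by (rule size_list_estimation') simp
  then show "(qs ! (i - 1), Internal qs p) \<in> measure size" by simp
qed auto

fun snap :: "('p, 'r::linorder) ptree \<Rightarrow> 'p list list" where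
  "snap (Leaf p) = [flush_pifo p]"
| "snap (Internal qs p) = concat (map snap qs)"

text \<open>The paper's recursive definition
  flush(q) = eps if |q| = 0, and flush(q) = flush(q') . pkt if |q| > 0 and pop(q) = (pkt, q'),
  is rendered as the graph of this recursion: flush_tree q w holds iff unfolding the
  recursion finitely often from q terminates with the word w.  (flush_fuel n q unfolds
  at most n pop steps.)\<close>
fun flush_fuel :: "nat \<Rightarrow> ('p, 'r::linorder) ptree \<Rightarrow> 'p list option" where
  "flush_fuel n q =
     (if tsize q = 0 then Some []
      else (case n of 0 \<Rightarrow> None
            | Suc m \<Rightarrow> (case pop_tree q of None \<Rightarrow> None
                 | Some (pkt, q') \<Rightarrow> map_option (\<lambda>w. w @ [pkt]) (flush_fuel m q'))))"

definition flush_tree :: "('p, 'r::linorder) ptree \<Rightarrow> 'p list \<Rightarrow> bool" where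
  "flush_tree q w \<longleftrightarrow> (\<exists>n. flush_fuel n q = Some w)"

end

theory Submission
  imports Defs
begin

fun idxs :: "topo list \<Rightarrow> 'p list \<Rightarrow> 'p \<Rightarrow> nat" where
  "idxs [] pk x = 0"
| "idxs (t#ts) pk x = (if x \<in> set (take (leaves t) pk) then 1 else Suc (idxs ts (drop (leaves t) pk) x))"

fun mk :: "'r \<Rightarrow> topo \<Rightarrow> 'p list \<Rightarrow> 'p list \<Rightarrow> ('p,'r) ptree"
and mks :: "'r \<Rightarrow> topo list \<Rightarrow> 'p list \<Rightarrow> 'p list \<Rightarrow> ('p,'r) ptree list" where
  "mk c Star pk s = Leaf (map (\<lambda>x. (x,c)) (filter (\<lambda>x. x \<in> set pk) s))"
| "mk c (Node ts) pk s = Internal (mks c ts pk s)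
     (map (\<lambda>x. (idxs ts pk x, c)) (filter (\<lambda>x. x \<in> set pk) s))"
| "mks c [] pk s = []"
| "mks c (t#ts) pk s = mk c t (take (leaves t) pk) s # mks c ts (drop (leaves t) pk) s"

lemma pop_const:
  "pop_pifo (map (\<lambda>x. (f x, c)) (y#ys)) = Some (f y, map (\<lambda>x. (f x, c)) ys)"
proof -
  have "snd ` set (map (\<lambda>x. (f x, c)) (y#ys)) = {c}" by auto
  then have m: "Min (snd ` set (map (\<lambda>x. (f x, c)) (y#ys))) = c" by (metis Min_singleton)
  have l: "(LEAST k. k < length (map (\<lambda>x. (f x, c)) (y#ys)) \<and> snd (map (\<lambda>x. (f x, c)) (y#ys) ! k) = c) = 0"
    by (rule Least_equality) auto
  show ?thesis unfolding pop_pifo_def Let_def m l by simp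
qed

lemma length_mks[simp]: "length (mks c ts pk s) = length ts"
  by (induction ts arbitrary: pk) auto

lemma idxs_range:
  "x \<in> set pk \<Longrightarrow> length pk = sum_list (map leaves ts) \<Longrightarrow> 1 \<le> idxs ts pk x \<and> idxs ts pk x \<le> length ts"
proof (induction ts arbitrary: pk)
  case Nil then show ?case by simp
next
  case (Cons t ts)
  show ?case
  proof (cases "x \<in> set (take (leaves t) pk)")
    case False
    then have "x \<in> set (drop (leaves t) pk)" using Cons.prems(1)
      by (metis Un_iff append_take_drop_id set_append)
    then show ?thesis using Cons.IH[of "drop (leaves t) pk"] Cons.prems False by auto
  qed simp
qed

lemma mk_notin:
  "x \<notin> set pk \<Longrightarrow> mk c t pk (x#s) = mk c t pk s"
  "x \<notin> set pk \<Longrightarrow> mks c ts pk (x#s) = mks c ts pk s"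
  by (induction c t pk s and c ts pk s rule: mk_mks.induct)
     (auto dest: in_set_takeD in_set_dropD)

lemma len_filter_disj:
  "(\<And>x. \<not> (P x \<and> Q x)) \<Longrightarrow> length (filter P xs) + length (filter Q xs) = length (filter (\<lambda>x. P x \<or> Q x) xs)"
  by (induction xs) auto

lemma tsize_mk:
  "distinct pk \<Longrightarrow> length pk = leaves t \<Longrightarrow> tsize (mk c t pk s) = length (filter (\<lambda>x. x \<in> set pk) s)"
  "distinct pk \<Longrightarrow> length pk = sum_list (map leaves ts) \<Longrightarrow> sum_list (map tsize (mks c ts pk s)) = length (filter (\<lambda>x. x \<in> set pk) s)"
proof (induction c t pk s and c ts pk s rule: mk_mks.induct)
  case (4 c t ts pk s)
  have d: "set (take (leaves t) pk) \<inter> set (drop (leaves t) pk) = {}" using 4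
    by (metis append_take_drop_id distinct_append)
  have "length (filter (\<lambda>x. x \<in> set (take (leaves t) pk)) s) + length (filter (\<lambda>x. x \<in> set (drop (leaves t) pk)) s)
     = length (filter (\<lambda>x. x \<in> set (take (leaves t) pk) \<or> x \<in> set (drop (leaves t) pk)) s)"
    apply (rule len_filter_disj) using d by auto
  also have "\<dots> = length (filter (\<lambda>x. x \<in> set pk) s)"
    by (metis Un_iff append_take_drop_id set_append)
  finally show ?case using 4 by simp
qed auto

lemma pop_mk:
  "distinct pk \<Longrightarrow> length pk = leaves t \<Longrightarrow> x \<in> set pk \<Longrightarrow>
     pop_tree (mk c t pk (x#s)) = Some (x, mk c t pk s)"
  "distinct pk \<Longrightarrow> length pk = sum_list (map leaves ts) \<Longrightarrow> x \<in> set pk \<Longrightarrow>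
     pop_tree (mks c ts pk (x#s) ! (idxs ts pk x - 1)) = Some (x, mks c ts pk s ! (idxs ts pk x - 1)) \<and>
     (mks c ts pk (x#s))[idxs ts pk x - 1 := mks c ts pk s ! (idxs ts pk x - 1)] = mks c ts pk s"
proof (induction c t pk s and c ts pk s rule: mk_mks.induct)
  case (1 c pk s)
  then show ?case using pop_const[of "\<lambda>x. x" c x "filter (\<lambda>x. x \<in> set pk) s"] by simp
next
  case (2 c ts pk s)
  have r: "1 \<le> idxs ts pk x \<and> idxs ts pk x \<le> length ts" using idxs_range 2 by simp
  show ?case using 2 r pop_const[of "idxs ts pk" c x "filter (\<lambda>x. x \<in> set pk) s"] by simp
next
  case (3 c pk s)
  then show ?case by simp
next
  case (4 c t ts pk s)
  have d: "set (take (leaves t) pk) \<inter> set (drop (leaves t) pk) = {}" using 4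
    by (metis append_take_drop_id distinct_append)
  have dt: "distinct (take (leaves t) pk)" "distinct (drop (leaves t) pk)" using 4 by auto
  show ?case
  proof (cases "x \<in> set (take (leaves t) pk)")
    case True
    then have "x \<notin> set (drop (leaves t) pk)" using d by auto
    then show ?thesis using True 4 dt mk_notin(2)[of x "drop (leaves t) pk" c ts s] by simp
  next
    case False
    then have xd: "x \<in> set (drop (leaves t) pk)" using 4
      by (metis Un_iff append_take_drop_id set_append)
    then obtain j where j: "idxs ts (drop (leaves t) pk) x = Suc j"
      using idxs_range[of x "drop (leaves t) pk" ts] 4 by (cases "idxs ts (drop (leaves t) pk) x") auto
    show ?thesis using False 4 dt xd j mk_notin(1)[of x "take (leaves t) pk" c t s] by simp
  qed
qed

lemma flush_mk:
  "distinct pk \<Longrightarrow> length pk = leaves t \<Longrightarrow> distinct s \<Longrightarrow> set s \<subseteq> set pk \<Longrightarrow>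
     flush_fuel (length s) (mk c t pk s) = Some (rev s)"
proof (induction s)
  case Nil
  then show ?case using tsize_mk(1)[of pk t c "[]"] by simp
next
  case (Cons x s)
  have "tsize (mk c t pk (x#s)) \<noteq> 0" using tsize_mk(1)[of pk t c "x#s"] Cons.prems by simp
  then show ?case using Cons pop_mk(1)[of pk t x c s] by simp
qed

lemma filter_single: "distinct s \<Longrightarrow> p \<in> set s \<Longrightarrow> filter (\<lambda>x. x = p) s = [p]"
  by (induction s) (auto simp: filter_empty_conv)

lemma flush_single: "flush_pifo [(p, c)] = [p]"
proof -
  have "pop_pifo [(p,c)] = Some (p, [])" using pop_const[of "\<lambda>x. x" c p "[]"] by simp
  moreover have "pop_pifo ([] :: ('a,'b::linorder) pifo) = None" by (simp add: pop_pifo_def)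
  ultimately show ?thesis by (simp add: flush_pifo.simps)
qed

lemma snap_mk:
  "length pk = leaves t \<Longrightarrow> distinct s \<Longrightarrow> set pk \<subseteq> set s \<Longrightarrow>
     snap (mk c t pk s) = map (\<lambda>x. [x]) pk"
  "length pk = sum_list (map leaves ts) \<Longrightarrow> distinct s \<Longrightarrow> set pk \<subseteq> set s \<Longrightarrow>
     concat (map snap (mks c ts pk s)) = map (\<lambda>x. [x]) pk"
proof (induction c t pk s and c ts pk s rule: mk_mks.induct)
  case (1 c pk s)
  then obtain p where "pk = [p]" by (cases pk) auto
  then show ?case using 1 filter_single[of s p] flush_single by simp
next
  case (4 c t ts pk s)
  then show ?case
    by (simp add: set_take_subset set_drop_subset subset_trans)
       (metis append_take_drop_id map_append set_drop_subset set_take_subset subset_trans)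
qed auto


lemma topo_mk:
  "length pk = leaves t \<Longrightarrow> has_topo (mk c t pk s) t"
  "length pk = sum_list (map leaves ts) \<Longrightarrow> list_all2 has_topo (mks c ts pk s) ts"
proof (induction c t pk s and c ts pk s rule: mk_mks.induct)
  case (2 c ts pk s)
  then show ?case using idxs_range[of _ pk ts] by (auto simp: pifo_elems_def)
qed auto

lemma wf_mk:
  "distinct pk \<Longrightarrow> length pk = leaves t \<Longrightarrow> wf_tree (mk c t pk s)"
  "distinct pk \<Longrightarrow> length pk = sum_list (map leaves ts) \<Longrightarrow> list_all wf_tree (mks c ts pk s) \<and>
     (\<forall>i<length ts. tsize (mks c ts pk s ! i) = length (filter (\<lambda>x. x \<in> set pk \<and> idxs ts pk x = Suc i) s))"
proof (induction c t pk s and c ts pk s rule: mk_mks.induct)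
  case (2 c ts pk s)
  then show ?case by (auto simp: pifo_count_def filter_map o_def filter_filter)
next
  case (4 c t ts pk s)
  have d: "set (take (leaves t) pk) \<inter> set (drop (leaves t) pk) = {}" using 4
    by (metis append_take_drop_id distinct_append)
  have u: "set pk = set (take (leaves t) pk) \<union> set (drop (leaves t) pk)"
    by (metis append_take_drop_id set_append)
  have dt: "distinct (take (leaves t) pk)" "distinct (drop (leaves t) pk)" using 4 by auto
  have lt: "length (take (leaves t) pk) = leaves t" "length (drop (leaves t) pk) = sum_list (map leaves ts)"
    using 4 by auto
  have IH2: "list_all wf_tree (mks c ts (drop (leaves t) pk) s) \<and>
     (\<forall>i<length ts. tsize (mks c ts (drop (leaves t) pk) s ! i) = length (filter (\<lambda>x. x \<in> set (drop (leaves t) pk) \<and> idxs ts (drop (leaves t) pk) x = Suc i) s))"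
    using 4(2) dt lt by blast
  have z: "idxs ts (drop (leaves t) pk) x \<noteq> 0" if "x \<in> set (drop (leaves t) pk)" for x
    using idxs_range[OF that lt(2)] by simp
  have i0: "tsize (mk c t (take (leaves t) pk) s) = length (filter (\<lambda>x. x \<in> set pk \<and> idxs (t#ts) pk x = Suc 0) s)"
    unfolding tsize_mk(1)[OF dt(1) lt(1)]
    using u z by (intro arg_cong[where f=length] filter_cong) auto
  have iS: "tsize (mks c ts (drop (leaves t) pk) s ! j) = length (filter (\<lambda>x. x \<in> set pk \<and> idxs (t#ts) pk x = Suc (Suc j)) s)"
    if "j < length ts" for j
    unfolding IH2[THEN conjunct2, rule_format, OF that]
    using u d by (intro arg_cong[where f=length] filter_cong) auto
  show ?case
  proof (intro conjI allI impI)
    show "list_all wf_tree (mks c (t # ts) pk s)" using 4(1) dt lt IH2 by simp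
  next
    fix i assume "i < length (t#ts)"
    then show "tsize (mks c (t # ts) pk s ! i) = length (filter (\<lambda>x. x \<in> set pk \<and> idxs (t # ts) pk x = Suc i) s)"
      using i0 iS by (cases i) auto
  qed
qed auto

theorem lemma4p8:
  fixes t :: topo and pkts :: "'p list" and \<pi> :: "'p \<Rightarrow> 'p"
  assumes "distinct pkts" and "length pkts = leaves t"
    and "bij_betw \<pi> (set pkts) (set pkts)"
  shows "\<exists>q :: ('p, 'r::linorder) ptree.
           has_topo q t \<and> wf_tree q \<and>
           flush_tree q (rev (map \<pi> pkts)) \<and>
           snap q = map (\<lambda>x. [x]) pkts"
proof -
  let ?s = "map \<pi> pkts"
  have ds: "distinct ?s" using assms(1,3) by (simp add: distinct_map bij_betw_def)
  have ss: "set ?s = set pkts" using assms(3) by (simp add: bij_betw_def)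
  let ?q = "mk (undefined :: 'r) t pkts ?s"
  have sub: "set ?s \<subseteq> set pkts" using ss by simp
  have "flush_fuel (length ?s) ?q = Some (rev ?s)"
    by (rule flush_mk[OF assms(1,2) ds sub])
  then have f: "flush_tree ?q (rev ?s)" unfolding flush_tree_def by blast
  have sub2: "set pkts \<subseteq> set ?s" using ss by simp
  have sn: "snap ?q = map (\<lambda>x. [x]) pkts" by (rule snap_mk(1)[OF assms(2) ds sub2])
  have h: "has_topo ?q t" by (rule topo_mk(1)[OF assms(2)])
  have w: "wf_tree ?q" by (rule wf_mk(1)[OF assms(1,2)])
  show ?thesis
    apply (rule exI[of _ ?q])
    using h w f sn by (intro conjI)
qed

end
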